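(* Let $\Phi=\phi_1\wedge\cdots\wedge\phi_m$ be a satisfiable extremal instance, meaning $\Pr_{\mathcal D}(\Phi)>0$. For each $k\in[m]$, the expected number of iterations of $\mathrm{PRS}(\Phi,\mathcal D)$ in which the scope of $\phi_k$ is resampled equals $q_{\{k\}}/q_\emptyset$. This holds for any rule used to choose the false clause.
   Context: Setting: For $i\in[n]$, $X_i$ takes values in a countable set $D_i$ with probability distribution $\mathcal D_i$; $\mathcal D=\prod_i\mathcal D_i$ is the product distribution. $\Phi=\phi_1\wedge\cdots\wedge\phi_m$, where clause $\phi_k$ is a Boolean function of the variables with indices in its nonempty scope $\mathrm{Scp}(\phi_k)\subseteq[n]$. $\Phi$ is extremal if for all $k\neq\ell$ with $\mathrm{Scp}(\phi_k)\cap\mathrm{Scp}(\phi_\ell)\ne\emptyset$, the formula $\phi_k\vee\phi_\ell$ is true under every assignment. Algorithm $\mathrm{PRS}(\Phi,\mathcal D)$: sample $\mathbf X$ from $\mathcal D$. While $\Phi(\mathbf X)$ is false, choose (by any rule) a clause $\phi_k$ false under the current $\mathbf X$ and resample all $X_i$, $i\in\mathrm{Scp}(\phi_k)$, independently from $\mathcal D_i$. Notation: $\Gamma$ is the dependency graph on $[m]$, with $k\sim\ell$ ($k\ne\ell$) iff $\mathrm{Scp}(\phi_k)\cap\mathrm{Scp}(\phi_\ell)\neq\emptyset$. $\mathcal I(\Gamma)$ is its set of independent sets, including $\emptyset$. $p_k=\Pr_{\mathcal D}(\neg\phi_k)$ and $p_I=\prod_{k\in I}p_k$. For $S\subseteq[m]$,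 $q_S=\sum_{I\in\mathcal I(\Gamma),\,I\supseteq S}(-1)^{|I\setminus S|}p_I$. *)

theory Defs
  imports "HOL-Probability.Probability"
begin

text \<open>Variables are indexed by i < n; an assignment is a function nat => 'a
  (values outside {..<n} are irrelevant).\<close>

type_synonym 'a asg = "nat \<Rightarrow> 'a"

text \<open>History of a run of PRS: the initial assignment together with the list
  of performed resampling steps (clause index, assignment after the step),
  most recent step first.\<close>
type_synonym 'a hist = "'a asg \<times> (nat \<times> 'a asg) list"

definition cur_asg :: "'a hist \<Rightarrow> 'a asg" where
  "cur_asg h = (case snd h of [] \<Rightarrow> fst h | (k, x) # _ \<Rightarrow> x)"

definition Phi :: "nat \<Rightarrow> (nat \<Rightarrow> 'a asg \<Rightarrow> bool) \<Rightarrow> 'a asg \<Rightarrow> bool" where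
  "Phi m phi x = (\<forall>k<m. phi k x)"

definition prod_dist :: "nat \<Rightarrow> (nat \<Rightarrow> 'a pmf) \<Rightarrow> 'a asg pmf" where
  "prod_dist n D = Pi_pmf {..<n} undefined D"

definition resample :: "(nat \<Rightarrow> 'a pmf) \<Rightarrow> nat set \<Rightarrow> 'a asg \<Rightarrow> 'a asg pmf" where
  "resample D T x = map_pmf (\<lambda>y i. if i \<in> T then y i else x i) (Pi_pmf T undefined D)"

definition prs_step ::
  "nat \<Rightarrow> (nat \<Rightarrow> 'a asg \<Rightarrow> bool) \<Rightarrow> (nat \<Rightarrow> nat set) \<Rightarrow> (nat \<Rightarrow> 'a pmf)
   \<Rightarrow> ('a hist \<Rightarrow> nat pmf) \<Rightarrow> 'a hist \<Rightarrow> 'a hist pmf" where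
  "prs_step m phi S D sel h =
     (if Phi m phi (cur_asg h) then return_pmf h
      else do { k \<leftarrow> sel h; x' \<leftarrow> resample D (S k) (cur_asg h);
                return_pmf (fst h, (k, x') # snd h) })"

fun prs_run ::
  "nat \<Rightarrow> nat \<Rightarrow> (nat \<Rightarrow> 'a asg \<Rightarrow> bool) \<Rightarrow> (nat \<Rightarrow> nat set) \<Rightarrow> (nat \<Rightarrow> 'a pmf)
   \<Rightarrow> ('a hist \<Rightarrow> nat pmf) \<Rightarrow> nat \<Rightarrow> 'a hist pmf" where
  "prs_run n m phi S D sel 0 = map_pmf (\<lambda>x. (x, [])) (prod_dist n D)"
| "prs_run n m phi S D sel (Suc t) = bind_pmf (prs_run n m phi S D sel t) (prs_step m phi S D sel)"

text \<open>Expected number of iterations in which the scope of clause k is resampled: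
  the number of such iterations is the (monotone) limit of the number among the
  first t iterations, so by monotone convergence its expectation is the supremum
  over t of the expectations.\<close>
definition expected_resamplings ::
  "nat \<Rightarrow> nat \<Rightarrow> (nat \<Rightarrow> 'a asg \<Rightarrow> bool) \<Rightarrow> (nat \<Rightarrow> nat set) \<Rightarrow> (nat \<Rightarrow> 'a pmf)
   \<Rightarrow> ('a hist \<Rightarrow> nat pmf) \<Rightarrow> nat \<Rightarrow> ennreal" where
  "expected_resamplings n m phi S D sel k =
     (SUP t. \<integral>\<^sup>+ h. of_nat (count_list (map fst (snd h)) k) \<partial>measure_pmf (prs_run n m phi S D sel t))"

definition dep_adj :: "(nat \<Rightarrow> nat set) \<Rightarrow> nat \<Rightarrow> nat \<Rightarrow> bool" where
  "dep_adj S k l = (k \<noteq> l \<and> S k \<inter> S l \<noteq> {})"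

definition indep_sets :: "nat \<Rightarrow> (nat \<Rightarrow> nat set) \<Rightarrow> nat set set" where
  "indep_sets m S = {I. I \<subseteq> {..<m} \<and> (\<forall>k\<in>I. \<forall>l\<in>I. \<not> dep_adj S k l)}"

definition p_clause :: "nat \<Rightarrow> (nat \<Rightarrow> 'a asg \<Rightarrow> bool) \<Rightarrow> (nat \<Rightarrow> 'a pmf) \<Rightarrow> nat \<Rightarrow> real" where
  "p_clause n phi D k = measure_pmf.prob (prod_dist n D) {x. \<not> phi k x}"

definition q_coeff ::
  "nat \<Rightarrow> nat \<Rightarrow> (nat \<Rightarrow> 'a asg \<Rightarrow> bool) \<Rightarrow> (nat \<Rightarrow> nat set) \<Rightarrow> (nat \<Rightarrow> 'a pmf) \<Rightarrow> nat set \<Rightarrow> real" where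
  "q_coeff n m phi S D T =
     (\<Sum>I\<in>{I \<in> indep_sets m S. T \<subseteq> I}. (-1) ^ card (I - T) * (\<Prod>k\<in>I. p_clause n phi D k))"

definition extremal ::
  "nat \<Rightarrow> nat \<Rightarrow> (nat \<Rightarrow> 'a asg \<Rightarrow> bool) \<Rightarrow> (nat \<Rightarrow> nat set) \<Rightarrow> (nat \<Rightarrow> 'a set) \<Rightarrow> bool" where
  "extremal n m phi S Dom =
     (\<forall>k<m. \<forall>l<m. dep_adj S k l \<longrightarrow>
        (\<forall>x. (\<forall>i<n. x i \<in> Dom i) \<longrightarrow> phi k x \<or> phi l x))"

end

theory Submission
  imports Defs
begin

locale prs =
  fixes n m :: nat
    and Dom :: "nat \<Rightarrow> 'a set"
    and D :: "nat \<Rightarrow> 'a pmf"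
    and phi :: "nat \<Rightarrow> 'a asg \<Rightarrow> bool"
    and S :: "nat \<Rightarrow> nat set"
    and k :: nat
  assumes dist_on_dom: "\<And>i. i < n \<Longrightarrow> set_pmf (D i) \<subseteq> Dom i"
    and scope_sub: "\<And>j. j < m \<Longrightarrow> S j \<subseteq> {..<n}"
    and scope_dep: "\<And>j x y. j < m \<Longrightarrow> (\<forall>i\<in>S j. x i = y i) \<Longrightarrow> phi j x = phi j y"
    and extr: "extremal n m phi S Dom"
    and k_lt: "k < m"
begin

definition good :: "'a asg \<Rightarrow> bool" where
  "good x \<longleftrightarrow> (\<forall>i<n. x i \<in> set_pmf (D i))"

definition Bad :: "'a asg \<Rightarrow> nat set" where
  "Bad x = {j. j < m \<and> \<not> phi j x}"

definition R :: "nat \<Rightarrow> ('a asg \<Rightarrow> ennreal) \<Rightarrow> 'a asg \<Rightarrow> ennreal" where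
  "R j f x = (\<integral>\<^sup>+y. f y \<partial>measure_pmf (resample D (S j) x))"

lemma finite_S: "j < m \<Longrightarrow> finite (S j)"
  using scope_sub finite_subset by blast

lemma finite_Bad: "finite (Bad x)"
  unfolding Bad_def by auto

lemma Bad_sub: "Bad x \<subseteq> {..<m}"
  unfolding Bad_def by auto

lemma Phi_iff: "Phi m phi x \<longleftrightarrow> Bad x = {}"
  unfolding Phi_def Bad_def by auto

lemma set_resample:
  assumes "finite T" "y \<in> set_pmf (resample D T x)"
  shows "(\<forall>i. i \<notin> T \<longrightarrow> y i = x i) \<and> (\<forall>i\<in>T. y i \<in> set_pmf (D i))"
  using assms unfolding resample_def
  by (auto simp: set_Pi_pmf PiE_dflt_def)

lemma good_resample:
  assumes "good x" "j < m" "y \<in> set_pmf (resample D (S j) x)"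
  shows "good y"
  using set_resample[OF finite_S[OF assms(2)] assms(3)] assms(1) unfolding good_def by metis

lemma good_dom: "good x \<Longrightarrow> i < n \<Longrightarrow> x i \<in> Dom i"
  unfolding good_def using dist_on_dom by blast

lemma bad_disjoint:
  assumes "good x" "j \<in> Bad x" "l \<in> Bad x" "j \<noteq> l"
  shows "S j \<inter> S l = {}"
proof (rule ccontr)
  assume "S j \<inter> S l \<noteq> {}"
  hence "dep_adj S j l" using assms(4) by (simp add: dep_adj_def)
  moreover have "j < m" "l < m" using assms unfolding Bad_def by auto
  ultimately have "phi j x \<or> phi l x"
    using extr good_dom[OF assms(1)] unfolding extremal_def by blast
  thus False using assms unfolding Bad_def by auto
qed

lemma frame:
  assumes "l < m" "finite T" "S l \<inter> T = {}" "y \<in> set_pmf (resample D T x)"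
  shows "phi l y = phi l x"
  using set_resample[OF assms(2,4)] assms(3) scope_dep[OF assms(1)] by blast

lemma resample_resample:
  assumes "finite T1" "finite T2" "T1 \<inter> T2 = {}"
  shows "bind_pmf (resample D T1 x) (resample D T2) = resample D (T1 \<union> T2) x"
proof -
  have "resample D (T1 \<union> T2) x = map_pmf (\<lambda>y i. if i \<in> T1 \<union> T2 then y i else x i)
      (map_pmf (\<lambda>(f,g) i. if i \<in> T1 then f i else g i)
             (pair_pmf (Pi_pmf T1 undefined D) (Pi_pmf T2 undefined D)))"
    unfolding resample_def by (subst Pi_pmf_union[OF assms]) (rule refl)
  also have "\<dots> = map_pmf (\<lambda>(f,g) i. if i \<in> T2 then g i else if i \<in> T1 then f i else x i)
             (pair_pmf (Pi_pmf T1 undefined D) (Pi_pmf T2 undefined D))"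
    unfolding map_pmf_comp
    by (intro map_pmf_cong refl) (use assms(3) in \<open>auto simp: fun_eq_iff\<close>)
  also have "\<dots> = bind_pmf (resample D T1 x) (resample D T2)"
    unfolding resample_def pair_pmf_def map_bind_pmf bind_map_pmf map_pmf_def[symmetric]
    by (simp add: map_pmf_def bind_assoc_pmf bind_return_pmf)
  finally show ?thesis ..
qed

lemma R_comm:
  assumes "j < m" "l < m" "S j \<inter> S l = {}"
  shows "R j (R l f) x = R l (R j f) x"
proof -
  have "R j (R l f) x = (\<integral>\<^sup>+y. f y \<partial>measure_pmf (bind_pmf (resample D (S j) x) (resample D (S l))))"
    unfolding R_def by simp
  also have "\<dots> = (\<integral>\<^sup>+y. f y \<partial>measure_pmf (resample D (S j \<union> S l) x))"
    using resample_resample[OF finite_S[OF assms(1)] finite_S[OF assms(2)] assms(3)] by simp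
  also have "\<dots> = (\<integral>\<^sup>+y. f y \<partial>measure_pmf (bind_pmf (resample D (S l) x) (resample D (S j))))"
    using resample_resample[OF finite_S[OF assms(2)] finite_S[OF assms(1)]] assms(3)
    by (simp add: Un_commute Int_commute)
  also have "\<dots> = R l (R j f) x" unfolding R_def by simp
  finally show ?thesis .
qed

end

lemma Min_SUP_le:
  fixes h :: "nat \<Rightarrow> nat \<Rightarrow> 'b::complete_linorder"
  assumes "finite J" "J \<noteq> {}" "\<And>j. j \<in> J \<Longrightarrow> incseq (h j)"
  shows "Min ((\<lambda>j. SUP s. h j s) ` J) \<le> (SUP s. Min ((\<lambda>j. h j s) ` J))"
proof (rule ccontr)
  let ?L = "SUP s. Min ((\<lambda>j. h j s) ` J)"
  assume "\<not> ?thesis"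
  hence lt: "?L < Min ((\<lambda>j. SUP s. h j s) ` J)" by simp
  have "\<forall>j\<in>J. ?L < (SUP s. h j s)"
    using lt assms(1,2) by (simp add: Min_gr_iff)
  hence "\<forall>j\<in>J. \<exists>s. ?L < h j s" by (simp add: less_SUP_iff)
  then obtain sf where sf: "\<forall>j\<in>J. ?L < h j (sf j)" by metis
  define s0 where "s0 = Max (sf ` J)"
  have "\<forall>j\<in>J. ?L < h j s0"
  proof
    fix j assume j: "j \<in> J"
    have "sf j \<le> s0" unfolding s0_def using assms(1) j by simp
    hence "h j (sf j) \<le> h j s0" using assms(3)[OF j] by (simp add: incseq_def)
    thus "?L < h j s0" using sf j by (meson less_le_trans)
  qed
  hence "?L < Min ((\<lambda>j. h j s0) ` J)" using assms(1,2) by (simp add: Min_gr_iff)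
  moreover have "Min ((\<lambda>j. h j s0) ` J) \<le> ?L" by (rule SUP_upper) simp
  ultimately show False by simp
qed

context prs
begin

definition a :: "nat \<Rightarrow> ennreal" where "a j = (if j = k then 1 else 0)"

definition Tmin :: "('a asg \<Rightarrow> ennreal) \<Rightarrow> 'a asg \<Rightarrow> ennreal" where
  "Tmin f x = (if Bad x = {} then 0 else Min ((\<lambda>j. a j + R j f x) ` Bad x))"

definition g :: "nat \<Rightarrow> 'a asg \<Rightarrow> ennreal" where
  "g s = (Tmin ^^ s) (\<lambda>_. 0)"

definition V :: "'a asg \<Rightarrow> ennreal" where
  "V x = (SUP s. g s x)"

lemma R_mono: "(\<And>y. f y \<le> f' y) \<Longrightarrow> R j f x \<le> R j f' x"
  unfolding R_def by (intro nn_integral_mono) auto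

lemma R_mono_good:
  assumes "good x" "j < m" "\<And>y. good y \<Longrightarrow> f y \<le> f' y"
  shows "R j f x \<le> R j f' x"
  unfolding R_def
  by (intro nn_integral_mono_AE AE_pmfI) (use assms good_resample in blast)

lemma R_cong_good:
  assumes "good x" "j < m" "\<And>y. good y \<Longrightarrow> f y = f' y"
  shows "R j f x = R j f' x"
  unfolding R_def
  by (intro nn_integral_cong_AE AE_pmfI) (use assms good_resample in blast)

lemma R_add_const: "R j (\<lambda>y. c + f y) x = c + R j f x"
  unfolding R_def by (subst nn_integral_add) (auto simp: measure_pmf.emeasure_space_1)

lemma R_const: "R j (\<lambda>y. c) x = c"
  unfolding R_def by (simp add: measure_pmf.emeasure_space_1)

lemma R_cmult: "R j (\<lambda>y. c * f y) x = c * R j f x"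
  unfolding R_def by (subst nn_integral_cmult) auto

lemma R_SUP:
  assumes "\<And>y. incseq (\<lambda>s. f s y)"
  shows "R j (\<lambda>y. SUP s. f s y) x = (SUP s. R j (f s) x)"
  unfolding R_def
  by (rule nn_integral_monotone_convergence_SUP) (use assms in \<open>auto simp: incseq_def le_fun_def\<close>)

lemma Tmin_mono: "(\<And>y. f y \<le> f' y) \<Longrightarrow> Tmin f x \<le> Tmin f' x"
proof -
  assume h: "\<And>y. f y \<le> f' y"
  show ?thesis
  proof (cases "Bad x = {}")
    case False
    show ?thesis unfolding Tmin_def using False finite_Bad
      by (auto intro!: Min.boundedI add_left_mono R_mono h
               intro: order.trans[OF Min_le])
  qed (simp add: Tmin_def)
qed

lemma Tmin_le: "j \<in> Bad x \<Longrightarrow> Tmin f x \<le> a j + R j f x"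
  unfolding Tmin_def using finite_Bad by (auto intro: Min_le)

lemma Tmin_Phi: "Bad x = {} \<Longrightarrow> Tmin f x = 0"
  unfolding Tmin_def by simp

lemma Tmin_attained: "Bad x \<noteq> {} \<Longrightarrow> \<exists>j\<in>Bad x. Tmin f x = a j + R j f x"
proof -
  assume h: "Bad x \<noteq> {}"
  have "Min ((\<lambda>j. a j + R j f x) ` Bad x) \<in> (\<lambda>j. a j + R j f x) ` Bad x"
    by (rule Min_in) (use h finite_Bad in auto)
  thus ?thesis using h unfolding Tmin_def by auto
qed

lemma g_0: "g 0 = (\<lambda>_. 0)" unfolding g_def by simp

lemma g_Suc: "g (Suc s) = Tmin (g s)" unfolding g_def by simp

lemma g_mono_Suc: "g s x \<le> g (Suc s) x"
proof (induction s arbitrary: x)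
  case 0 show ?case by (simp add: g_0)
next
  case (Suc s) thus ?case unfolding g_Suc by (intro Tmin_mono) (simp add: g_Suc)
qed

lemma g_incseq: "incseq (\<lambda>s. g s x)"
  by (intro incseq_SucI g_mono_Suc)

lemma g_le_V: "g s x \<le> V x"
  unfolding V_def by (rule SUP_upper) simp

lemma V_Phi: "Bad x = {} \<Longrightarrow> V x = 0"
proof -
  assume h: "Bad x = {}"
  have "g s x = 0" for s by (cases s) (simp_all add: g_0 g_Suc Tmin_Phi h)
  thus ?thesis unfolding V_def by simp
qed

lemma V_le_step:
  assumes "j \<in> Bad x"
  shows "V x \<le> a j + R j V x"
  unfolding V_def
proof (rule SUP_least)
  fix s
  show "g s x \<le> a j + R j (\<lambda>x. SUP s. g s x) x"
  proof (cases s)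
    case 0 thus ?thesis by (simp add: g_0)
  next
    case (Suc s')
    have "g s x \<le> a j + R j (g s') x" unfolding Suc g_Suc by (rule Tmin_le[OF assms])
    also have "\<dots> \<le> a j + R j (\<lambda>x. SUP s. g s x) x"
      by (intro add_left_mono R_mono) (rule SUP_upper, simp)
    finally show ?thesis .
  qed
qed

lemma Tmin_V: "Tmin V x \<le> V x"
proof (cases "Bad x = {}")
  case True thus ?thesis by (simp add: Tmin_Phi)
next
  case False
  have eq: "a j + R j V x = (SUP s. a j + R j (g s) x)" for j
  proof -
    have "R j V x = (SUP s. R j (g s) x)"
      unfolding V_def by (rule R_SUP) (rule g_incseq)
    thus ?thesis by (simp add: ennreal_SUP_add_right)
  qed
  have "Tmin V x = Min ((\<lambda>j. SUP s. a j + R j (g s) x) ` Bad x)"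
    unfolding Tmin_def using False eq by simp
  also have "\<dots> \<le> (SUP s. Min ((\<lambda>j. a j + R j (g s) x) ` Bad x))"
  proof (rule Min_SUP_le[OF finite_Bad False])
    fix j show "incseq (\<lambda>s. a j + R j (g s) x)"
      by (intro incseq_SucI add_left_mono R_mono g_mono_Suc)
  qed
  also have "\<dots> = (SUP s. g (Suc s) x)"
    unfolding g_Suc Tmin_def using False by simp
  also have "\<dots> \<le> V x" by (intro SUP_least g_le_V)
  finally show ?thesis .
qed

lemma V_attained:
  assumes "Bad x \<noteq> {}"
  shows "\<exists>j\<in>Bad x. V x = a j + R j V x"
proof -
  obtain j where j: "j \<in> Bad x" "Tmin V x = a j + R j V x" using Tmin_attained[OF assms] by blast
  have "V x \<le> a j + R j V x" by (rule V_le_step[OF j(1)])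
  moreover have "a j + R j V x \<le> V x" using Tmin_V[of x] j(2) by simp
  ultimately show ?thesis using j(1) by (intro bexI[of _ j]) auto
qed

end

locale prs_sat = prs +
  assumes sat: "measure_pmf.prob (prod_dist n D) {x. Phi m phi x} > 0"
begin

lemma exists_z: "\<exists>z. Phi m phi z \<and> good z"
proof -
  have "measure (measure_pmf (prod_dist n D)) {x. Phi m phi x} \<noteq> 0" using sat by simp
  hence "set_pmf (prod_dist n D) \<inter> {x. Phi m phi x} \<noteq> {}"
    by (simp add: measure_pmf_zero_iff)
  then obtain z where z: "z \<in> set_pmf (prod_dist n D)" "Phi m phi z" by blast
  have "good z" using z(1) unfolding prod_dist_def good_def
    by (auto simp: set_Pi_pmf PiE_dflt_def)
  thus ?thesis using z by blast
qed

definition z :: "'a asg" where "z = (SOME z. Phi m phi z \<and> good z)"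

lemma z: "Phi m phi z" "good z"
  using someI_ex[OF exists_z] unfolding z_def by auto

definition eta :: real where "eta = (\<Prod>i<n. pmf (D i) (z i))"

lemma eta_pos: "eta > 0"
proof -
  have "\<forall>i<n. z i \<in> set_pmf (D i)" using z(2) unfolding good_def by blast
  thus ?thesis unfolding eta_def by (intro prod_pos) (simp add: pmf_positive)
qed

lemma eta_le1: "eta \<le> 1"
  unfolding eta_def by (intro prod_le_1) (auto simp: pmf_le_1)

definition dz :: "'a asg \<Rightarrow> nat" where "dz x = card {i. i < n \<and> x i \<noteq> z i}"

lemma dz_le: "dz x \<le> n"
proof -
  have "card {i. i < n \<and> x i \<noteq> z i} \<le> card {..<n}" by (intro card_mono) auto
  thus ?thesis unfolding dz_def by simp
qed

definition Nmax :: "('a asg \<Rightarrow> ennreal) \<Rightarrow> 'a asg \<Rightarrow> ennreal" where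
  "Nmax f x = (if Bad x = {} then 0 else Max ((\<lambda>j. R j f x) ` Bad x))"

definition N :: "nat \<Rightarrow> 'a asg \<Rightarrow> ennreal" where
  "N s = (Nmax ^^ s) (\<lambda>x. if Bad x = {} then 0 else 1)"

lemma N_0: "N 0 x = (if Bad x = {} then 0 else 1)" unfolding N_def by simp
lemma N_Suc: "N (Suc s) = Nmax (N s)" unfolding N_def by simp

lemma R_mono_supp:
  "(\<And>y. y \<in> set_pmf (resample D (S j) x) \<Longrightarrow> f y \<le> f' y) \<Longrightarrow> R j f x \<le> R j f' x"
  unfolding R_def by (intro nn_integral_mono_AE AE_pmfI) auto

lemma R_le_Nmax: "j \<in> Bad x \<Longrightarrow> R j f x \<le> Nmax f x"
  unfolding Nmax_def using finite_Bad by (auto intro: Max_ge)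

lemma Nmax_attained: "Bad x \<noteq> {} \<Longrightarrow> \<exists>j\<in>Bad x. Nmax f x = R j f x"
proof -
  assume h: "Bad x \<noteq> {}"
  have "Max ((\<lambda>j. R j f x) ` Bad x) \<in> (\<lambda>j. R j f x) ` Bad x"
    by (rule Max_in) (use h finite_Bad in auto)
  thus ?thesis using h unfolding Nmax_def by auto
qed

lemma Nmax_Phi: "Bad x = {} \<Longrightarrow> Nmax f x = 0" unfolding Nmax_def by simp

lemma Nmax_le:
  assumes "\<And>j. j \<in> Bad x \<Longrightarrow> R j f x \<le> c"
  shows "Nmax f x \<le> c"
proof (cases "Bad x = {}")
  case True thus ?thesis by (simp add: Nmax_Phi)
next
  case False
  then obtain j where "j \<in> Bad x" "Nmax f x = R j f x" using Nmax_attained by blast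
  thus ?thesis using assms by simp
qed

lemma N_Phi: "Bad x = {} \<Longrightarrow> N s x = 0"
  by (cases s) (simp_all add: N_0 N_Suc Nmax_Phi)

lemma N_le1: "N s x \<le> 1"
proof (induction s arbitrary: x)
  case 0 thus ?case by (simp add: N_0)
next
  case (Suc s)
  show ?case unfolding N_Suc
  proof (rule Nmax_le)
    fix j
    have "R j (N s) x \<le> R j (\<lambda>_. 1) x" by (intro R_mono Suc.IH)
    thus "R j (N s) x \<le> 1" by (simp add: R_const)
  qed
qed

lemma Nmax_mono_good:
  assumes "good x" "\<And>y. good y \<Longrightarrow> f y \<le> f' y"
  shows "Nmax f x \<le> Nmax f' x"
proof (rule Nmax_le)
  fix j assume j: "j \<in> Bad x"
  hence "j < m" unfolding Bad_def by auto
  have "R j f x \<le> R j f' x" by (rule R_mono_good[OF assms(1) \<open>j<m\<close> assms(2)])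
  also have "\<dots> \<le> Nmax f' x" by (rule R_le_Nmax[OF j])
  finally show "R j f x \<le> Nmax f' x" .
qed

lemma N_dec: "N (Suc s) x \<le> N s x"
proof (induction s arbitrary: x)
  case 0
  show ?case
  proof (cases "Bad x = {}")
    case True thus ?thesis by (simp add: N_Phi)
  next
    case False thus ?thesis using N_le1[of 1 x] by (simp add: N_0)
  qed
next
  case (Suc s)
  show ?case unfolding N_Suc[of "Suc s"]
  proof (rule Nmax_le)
    fix j assume j: "j \<in> Bad x"
    have "R j (N (Suc s)) x \<le> R j (N s) x" by (intro R_mono Suc.IH)
    also have "\<dots> \<le> Nmax (N s) x" by (rule R_le_Nmax[OF j])
    finally show "R j (N (Suc s)) x \<le> N (Suc s) x" by (simp add: N_Suc)
  qed
qed

lemma N_antimono: "s \<le> t \<Longrightarrow> N t x \<le> N s x"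
proof (induction t)
  case 0 thus ?case by simp
next
  case (Suc t)
  show ?case
  proof (cases "s = Suc t")
    case False
    hence "s \<le> t" using Suc.prems by simp
    thus ?thesis using Suc.IH N_dec order.trans by blast
  qed simp
qed

lemma prob_good_event:
  assumes "j < m"
  shows "ennreal eta \<le> emeasure (measure_pmf (resample D (S j) x)) {y. \<forall>i\<in>S j. y i = z i}"
proof -
  let ?T = "S j"
  have fin: "finite ?T" using finite_S[OF assms] .
  define c0 where "c0 = (\<lambda>i. if i \<in> ?T then z i else undefined)"
  have "eta \<le> (\<Prod>i\<in>?T. pmf (D i) (z i))"
  proof -
    have sub: "?T \<subseteq> {..<n}" using scope_sub[OF assms] .
    have "eta = (\<Prod>i\<in>{..<n} - ?T. pmf (D i) (z i)) * (\<Prod>i\<in>?T. pmf (D i) (z i))"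
      unfolding eta_def using prod.subset_diff[OF sub] by simp
    also have "\<dots> \<le> 1 * (\<Prod>i\<in>?T. pmf (D i) (z i))"
      by (intro mult_right_mono prod_le_1 prod_nonneg) (auto simp: pmf_le_1)
    finally show ?thesis by simp
  qed
  also have "(\<Prod>i\<in>?T. pmf (D i) (z i)) = pmf (Pi_pmf ?T undefined D) c0"
    using fin by (subst pmf_Pi) (auto simp: c0_def)
  finally have "ennreal eta \<le> emeasure (measure_pmf (Pi_pmf ?T undefined D)) {c0}"
    by (simp add: emeasure_pmf_single)
  also have "\<dots> \<le> emeasure (measure_pmf (Pi_pmf ?T undefined D))
       ((\<lambda>y i. if i \<in> ?T then y i else x i) -` {y. \<forall>i\<in>?T. y i = z i})"
    by (intro emeasure_mono) (auto simp: c0_def)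
  also have "\<dots> = emeasure (measure_pmf (resample D (S j) x)) {y. \<forall>i\<in>S j. y i = z i}"
    unfolding resample_def by simp
  finally show ?thesis .
qed

lemma z_step:
  "good x \<Longrightarrow> dz x \<le> d \<Longrightarrow> d \<le> s \<Longrightarrow> N s x + ennreal (eta ^ d) \<le> 1"
proof (induction s arbitrary: x d)
  case 0
  hence "d = 0" by simp
  hence "dz x = 0" using 0 by simp
  hence "\<forall>i<n. x i = z i" unfolding dz_def by auto
  hence "phi j x = phi j z" if "j < m" for j
    using scope_dep[OF that] scope_sub[OF that] by blast
  hence "Bad x = Bad z" unfolding Bad_def by auto
  also have "Bad z = {}" using z(1) Phi_iff by simp
  finally show ?case using \<open>d = 0\<close> by (simp add: N_Phi)
next
  case (Suc s)
  show ?case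
  proof (cases "Bad x = {}")
    case True
    have "eta ^ d \<le> 1" by (rule power_le_one) (use eta_pos eta_le1 in auto)
    thus ?thesis using True by (simp add: N_Phi)
  next
    case False
    then obtain j where j: "j \<in> Bad x" "N (Suc s) x = R j (N s) x"
      unfolding N_Suc using Nmax_attained by blast
    have jm: "j < m" and jx: "\<not> phi j x" using j(1) unfolding Bad_def by auto
    have "\<exists>i0\<in>S j. x i0 \<noteq> z i0"
    proof (rule ccontr)
      assume "\<not> ?thesis"
      hence "phi j x = phi j z" using scope_dep[OF jm] by blast
      thus False using jx z(1) jm unfolding Phi_def by simp
    qed
    then obtain i0 where i0: "i0 \<in> S j" "x i0 \<noteq> z i0" by blast
    have i0n: "i0 < n" using i0(1) scope_sub[OF jm] by auto
    have "dz x \<ge> 1"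
    proof -
      have "{i0} \<subseteq> {i. i < n \<and> x i \<noteq> z i}" using i0 i0n by auto
      hence "card {i0} \<le> dz x" unfolding dz_def by (intro card_mono) auto
      thus ?thesis by simp
    qed
    then obtain d' where d': "d = Suc d'" using Suc.prems(2) by (cases d) auto
    have d's: "d' \<le> s" using Suc.prems(3) d' by simp
    let ?E = "{y. \<forall>i\<in>S j. y i = z i}"
    have pt: "N s y + ennreal (eta ^ d') * indicator ?E y \<le> 1"
      if y: "y \<in> set_pmf (resample D (S j) x)" for y
    proof (cases "y \<in> ?E")
      case True
      have gy: "good y" using good_resample[OF Suc.prems(1) jm y] .
      have sy: "\<forall>i. i \<notin> S j \<longrightarrow> y i = x i" using set_resample[OF finite_S[OF jm] y] by blast
      have "{i. i < n \<and> y i \<noteq> z i} \<subseteq> {i. i < n \<and> x i \<noteq> z i} - {i0}"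
        using True sy i0 by auto
      hence "dz y \<le> card ({i. i < n \<and> x i \<noteq> z i} - {i0})"
        unfolding dz_def by (intro card_mono) auto
      also have "\<dots> = dz x - 1" unfolding dz_def using i0 i0n by (subst card_Diff_singleton) auto
      finally have "dz y \<le> d'" using Suc.prems(2) d' by simp
      from Suc.IH[OF gy this d's] True show ?thesis by simp
    next
      case False thus ?thesis using N_le1[of s y] by simp
    qed
    have "R j (N s) x + ennreal (eta ^ d') * emeasure (measure_pmf (resample D (S j) x)) ?E
          = R j (\<lambda>y. N s y + ennreal (eta ^ d') * indicator ?E y) x"
      unfolding R_def by (subst nn_integral_add) (auto simp: nn_integral_cmult_indicator)
    also have "\<dots> \<le> R j (\<lambda>_. 1) x" by (intro R_mono_supp pt)
    also have "\<dots> = 1" by (simp add: R_const)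
    finally have *: "R j (N s) x + ennreal (eta ^ d') * emeasure (measure_pmf (resample D (S j) x)) ?E \<le> 1" .
    have "ennreal (eta ^ d) = ennreal (eta ^ d') * ennreal eta"
      using d' eta_pos by (simp add: ennreal_mult[symmetric] mult.commute)
    also have "\<dots> \<le> ennreal (eta ^ d') * emeasure (measure_pmf (resample D (S j) x)) ?E"
      by (intro mult_left_mono prob_good_event[OF jm]) auto
    finally have "N (Suc s) x + ennreal (eta ^ d) \<le> R j (N s) x + ennreal (eta ^ d') * emeasure (measure_pmf (resample D (S j) x)) ?E"
      using j(2) by (simp add: add_left_mono)
    thus ?thesis using * by simp
  qed
qed

definition theta :: real where "theta = 1 - eta ^ n"

lemma theta_ge0: "theta \<ge> 0"
proof -
  have "eta ^ n \<le> 1" by (rule power_le_one) (use eta_pos eta_le1 in auto)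
  thus ?thesis unfolding theta_def by simp
qed

lemma theta_lt1: "theta < 1"
proof -
  have "eta ^ n > 0" using eta_pos by simp
  thus ?thesis unfolding theta_def by simp
qed

lemma N_n_le: "good x \<Longrightarrow> N n x \<le> ennreal theta * N 0 x"
proof -
  assume gx: "good x"
  show ?thesis
  proof (cases "Bad x = {}")
    case True thus ?thesis by (simp add: N_Phi)
  next
    case False
    have h: "N n x + ennreal (eta ^ n) \<le> 1" by (rule z_step[OF gx dz_le]) simp
    obtain r where r: "N n x = ennreal r" "r \<ge> 0"
      using N_le1[of n x] by (cases "N n x" rule: ennreal_cases) (auto simp: top_unique)
    have "r + eta ^ n \<le> 1"
      using h r eta_pos by (simp add: ennreal_plus[symmetric] del: ennreal_plus)
    hence "r \<le> theta" unfolding theta_def by simp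
    thus ?thesis using False r by (simp add: N_0)
  qed
qed

lemma Nmax_cmult: "Nmax (\<lambda>y. c * f y) x \<le> c * Nmax f x"
proof (rule Nmax_le)
  fix j assume j: "j \<in> Bad x"
  show "R j (\<lambda>y. c * f y) x \<le> c * Nmax f x"
    unfolding R_cmult by (intro mult_left_mono R_le_Nmax[OF j]) auto
qed

lemma N_shift: "good x \<Longrightarrow> N (s + n) x \<le> ennreal theta * N s x"
proof (induction s arbitrary: x)
  case 0 thus ?case using N_n_le by simp
next
  case (Suc s)
  have "N (Suc s + n) x = Nmax (N (s + n)) x" by (simp add: N_Suc)
  also have "\<dots> \<le> Nmax (\<lambda>y. ennreal theta * N s y) x"
    by (intro Nmax_mono_good Suc.prems Suc.IH)
  also have "\<dots> \<le> ennreal theta * N (Suc s) x" unfolding N_Suc by (rule Nmax_cmult)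
  finally show ?case .
qed

lemma N_geom: "good x \<Longrightarrow> N (q * n) x \<le> ennreal (theta ^ q)"
proof (induction q)
  case 0 thus ?case using N_le1[of 0 x] by simp
next
  case (Suc q)
  have "N (Suc q * n) x = N (q * n + n) x" by (simp add: add.commute)
  also have "\<dots> \<le> ennreal theta * N (q * n) x" by (rule N_shift[OF Suc.prems])
  also have "\<dots> \<le> ennreal theta * ennreal (theta ^ q)" by (intro mult_left_mono Suc.IH[OF Suc.prems]) auto
  also have "\<dots> = ennreal (theta ^ Suc q)" using theta_ge0 by (simp add: ennreal_mult[symmetric])
  finally show ?case .
qed

lemma N_small: "good x \<Longrightarrow> e > 0 \<Longrightarrow> \<exists>s. N s x \<le> ennreal e"
proof -
  assume gx: "good x" and e: "e > 0"
  have "(\<lambda>q. theta ^ q) \<longlonglongrightarrow> 0" using theta_ge0 theta_lt1 by (intro LIMSEQ_power_zero) auto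
  hence "eventually (\<lambda>q. theta ^ q < e) sequentially" using e by (rule order_tendstoD(2))
  then obtain q where "theta ^ q < e" unfolding eventually_sequentially by blast
  hence "N (q * n) x \<le> ennreal e" using N_geom[OF gx, of q] by (meson ennreal_leI less_imp_le order.trans)
  thus ?thesis by blast
qed

end

context prs_sat
begin

lemma R_add: "R j (\<lambda>y. f y + h y) x = R j f x + R j h x"
  unfolding R_def by (rule nn_integral_add) auto

lemma R_sum: "R j (\<lambda>y. \<Sum>r\<in>A. f r y) x = (\<Sum>r\<in>A. R j (f r) x)"
  unfolding R_def by (rule nn_integral_sum) auto

lemma kbad_le: "good x \<Longrightarrow> k \<in> Bad x \<Longrightarrow> 1 \<le> g s x + N s x"
proof (induction s arbitrary: x)
  case 0 thus ?case by (auto simp: g_0 N_0)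
next
  case (Suc s)
  have ne: "Bad x \<noteq> {}" using Suc.prems by auto
  obtain j where j: "j \<in> Bad x" "g (Suc s) x = a j + R j (g s) x"
    unfolding g_Suc using Tmin_attained[OF ne] by blast
  have jm: "j < m" using j(1) unfolding Bad_def by auto
  have NR: "R j (N s) x \<le> N (Suc s) x" unfolding N_Suc by (rule R_le_Nmax[OF j(1)])
  show ?case
  proof (cases "j = k")
    case True
    hence "1 \<le> g (Suc s) x" using j(2) by (simp add: a_def)
    thus ?thesis by (rule order.trans) simp
  next
    case False
    have disj: "S k \<inter> S j = {}" using bad_disjoint[OF Suc.prems(1) Suc.prems(2) j(1)] False by auto
    have "1 = R j (\<lambda>_. 1) x" by (simp add: R_const)
    also have "\<dots> \<le> R j (\<lambda>y. g s y + N s y) x"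
    proof (rule R_mono_supp)
      fix y assume y: "y \<in> set_pmf (resample D (S j) x)"
      have gy: "good y" using good_resample[OF Suc.prems(1) jm y] .
      have "phi k y = phi k x" using frame[OF k_lt finite_S[OF jm] disj y] .
      hence "k \<in> Bad y" using Suc.prems(2) unfolding Bad_def by auto
      thus "1 \<le> g s y + N s y" by (rule Suc.IH[OF gy])
    qed
    also have "\<dots> = R j (g s) x + R j (N s) x" by (rule R_add)
    also have "\<dots> \<le> g (Suc s) x + N (Suc s) x"
      using j(2) NR by (intro add_mono) (auto simp: a_def)
    finally show ?thesis .
  qed
qed

lemma V_ge_kbad:
  assumes "good x" "k \<in> Bad x"
  shows "1 \<le> V x"
proof (rule ennreal_le_epsilon)
  fix e :: real assume e: "0 < e"
  obtain s where s: "N s x \<le> ennreal e" using N_small[OF assms(1) e] by blast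
  have "1 \<le> g s x + N s x" by (rule kbad_le[OF assms])
  also have "\<dots> \<le> V x + ennreal e" by (intro add_mono g_le_V s)
  finally show "1 \<le> V x + ennreal e" .
qed

lemma E_step: "good x \<Longrightarrow> j \<in> Bad x \<Longrightarrow> a j + R j (g s) x \<le> V x"
proof (induction s arbitrary: x j)
  case 0
  show ?case
  proof (cases "j = k")
    case True
    thus ?thesis using V_ge_kbad[OF 0(1)] 0(2) by (simp add: a_def g_0 R_const)
  next
    case False thus ?thesis by (simp add: a_def g_0 R_const)
  qed
next
  case (Suc s)
  have ne: "Bad x \<noteq> {}" using Suc.prems by auto
  obtain j' where j': "j' \<in> Bad x" "V x = a j' + R j' V x" using V_attained[OF ne] by blast
  have jm: "j < m" using Suc.prems(2) unfolding Bad_def by auto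
  have j'm: "j' < m" using j'(1) unfolding Bad_def by auto
  show ?case
  proof (cases "j' = j")
    case True
    have "a j + R j (g (Suc s)) x \<le> a j + R j V x" by (intro add_left_mono R_mono g_le_V)
    thus ?thesis using j'(2) True by simp
  next
    case False
    have disj: "S j \<inter> S j' = {}" using bad_disjoint[OF Suc.prems(1) Suc.prems(2) j'(1)] False by auto
    have "R j (g (Suc s)) x \<le> R j (\<lambda>y. a j' + R j' (g s) y) x"
    proof (rule R_mono_supp)
      fix y assume y: "y \<in> set_pmf (resample D (S j) x)"
      have "phi j' y = phi j' x" using frame[OF j'm finite_S[OF jm] _ y] disj by blast
      hence "j' \<in> Bad y" using j'(1) unfolding Bad_def by auto
      thus "g (Suc s) y \<le> a j' + R j' (g s) y" unfolding g_Suc by (rule Tmin_le)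
    qed
    also have "\<dots> = a j' + R j (R j' (g s)) x" by (rule R_add_const)
    also have "R j (R j' (g s)) x = R j' (R j (g s)) x" by (rule R_comm[OF jm j'm disj])
    finally have "a j + R j (g (Suc s)) x \<le> a j' + (a j + R j' (R j (g s)) x)"
      by (simp add: add_left_mono ac_simps)
    also have "a j + R j' (R j (g s)) x = R j' (\<lambda>y. a j + R j (g s) y) x"
      by (rule R_add_const[symmetric])
    also have "\<dots> \<le> R j' V x"
    proof (rule R_mono_supp)
      fix y assume y: "y \<in> set_pmf (resample D (S j') x)"
      have gy: "good y" using good_resample[OF Suc.prems(1) j'm y] .
      have "phi j y = phi j x" using frame[OF jm finite_S[OF j'm] _ y] disj by blast
      hence "j \<in> Bad y" using Suc.prems(2) unfolding Bad_def by auto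
      thus "a j + R j (g s) y \<le> V y" by (rule Suc.IH[OF gy])
    qed
    finally show ?thesis using j'(2) by (simp add: add_left_mono)
  qed
qed

lemma V_harm:
  assumes "good x" "j \<in> Bad x"
  shows "V x = a j + R j V x"
proof (rule antisym)
  show "V x \<le> a j + R j V x" by (rule V_le_step[OF assms(2)])
  have "R j V x = (SUP s. R j (g s) x)"
    unfolding V_def by (rule R_SUP) (rule g_incseq)
  hence "a j + R j V x = (SUP s. a j + R j (g s) x)" by (simp add: ennreal_SUP_add_right)
  also have "\<dots> \<le> V x" by (intro SUP_least E_step[OF assms])
  finally show "a j + R j V x \<le> V x" .
qed

lemma g_le_sumN: "g s x \<le> (\<Sum>r<s. N r x)"
proof (induction s arbitrary: x)
  case 0 thus ?case by (simp add: g_0)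
next
  case (Suc s)
  show ?case
  proof (cases "Bad x = {}")
    case True thus ?thesis by (simp add: g_Suc Tmin_Phi)
  next
    case False
    then obtain j where j: "j \<in> Bad x" by blast
    have "g (Suc s) x \<le> a j + R j (g s) x" unfolding g_Suc by (rule Tmin_le[OF j])
    also have "\<dots> \<le> 1 + R j (\<lambda>y. \<Sum>r<s. N r y) x"
      by (intro add_mono R_mono Suc.IH) (simp add: a_def)
    also have "\<dots> = 1 + (\<Sum>r<s. R j (N r) x)" by (simp add: R_sum)
    also have "\<dots> \<le> 1 + (\<Sum>r<s. N (Suc r) x)"
      by (intro add_left_mono sum_mono) (simp add: N_Suc R_le_Nmax[OF j])
    also have "\<dots> = (\<Sum>r<Suc s. N r x)"
      using False by (subst sum.lessThan_Suc_shift) (simp add: N_0)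
    finally show ?thesis .
  qed
qed

definition Cb :: real where "Cb = real n / (1 - theta)"

lemma Cb_ge: "real n \<le> Cb" "Cb \<ge> 0"
proof -
  have p: "0 < 1 - theta" using theta_lt1 by simp
  have "1 - theta \<le> 1" using theta_ge0 by simp
  hence "real n * (1 - theta) \<le> real n" by (simp add: mult_left_le)
  thus "real n \<le> Cb" unfolding Cb_def using p by (simp add: le_divide_eq)
  thus "Cb \<ge> 0" by simp
qed

lemma sum_split_n: "(\<Sum>r<t + n. f r) = (\<Sum>r<n. f r) + (\<Sum>r<t. f (r + n))"
  for f :: "nat \<Rightarrow> ennreal"
  by (induction t) (simp_all add: ac_simps)

lemma sumN_bound: "good x \<Longrightarrow> (\<Sum>r<s. N r x) \<le> ennreal Cb"
proof (induction s rule: less_induct)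
  case (less s)
  show ?case
  proof (cases "s \<le> n")
    case True
    have "(\<Sum>r<s. N r x) \<le> (\<Sum>r<s. 1)" by (intro sum_mono N_le1)
    also have "\<dots> = of_nat s" by simp
    also have "\<dots> = ennreal (real s)" by (rule ennreal_of_nat_eq_real_of_nat)
    also have "\<dots> \<le> ennreal Cb" using True Cb_ge(1) by (intro ennreal_leI) simp
    finally show ?thesis .
  next
    case False
    show ?thesis
    proof (cases "n = 0")
      case True
      have "N r x = 0" for r
      proof -
        have "N (r + n) x \<le> ennreal theta * N r x" by (rule N_shift[OF less.prems])
        moreover have "theta = 0" unfolding theta_def using True by simp
        ultimately show ?thesis using True by simp
      qed
      thus ?thesis by simp
    next
      case False
    define t where "t = s - n"
    have t: "s = t + n" "t < s" using \<open>\<not> s \<le> n\<close> False unfolding t_def by auto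
    have "(\<Sum>r<s. N r x) = (\<Sum>r<n. N r x) + (\<Sum>r<t. N (r + n) x)"
      unfolding t(1) by (rule sum_split_n)
    also have "\<dots> \<le> of_nat n + (\<Sum>r<t. ennreal theta * N r x)"
    proof (intro add_mono sum_mono N_shift[OF less.prems])
      have "(\<Sum>r<n. N r x) \<le> (\<Sum>r<n. 1)" by (intro sum_mono N_le1)
      thus "(\<Sum>r<n. N r x) \<le> of_nat n" by simp
    qed
    also have "\<dots> = of_nat n + ennreal theta * (\<Sum>r<t. N r x)" by (simp add: sum_distrib_left)
    also have "\<dots> \<le> of_nat n + ennreal theta * ennreal Cb"
      by (intro add_left_mono mult_left_mono less.IH[OF t(2) less.prems]) auto
    also have "\<dots> = ennreal (real n + theta * Cb)"
      using theta_ge0 Cb_ge by (simp add: ennreal_mult ennreal_of_nat_eq_real_of_nat)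
    also have "real n + theta * Cb = Cb"
    proof -
      have p: "1 - theta \<noteq> 0" using theta_lt1 by simp
      show ?thesis unfolding Cb_def using p by (simp add: field_simps)
    qed
    finally show ?thesis .
    qed
  qed
qed

lemma V_bound: "good x \<Longrightarrow> V x \<le> ennreal Cb"
  unfolding V_def by (intro SUP_least order.trans[OF g_le_sumN sumN_bound])

end

context prs
begin

abbreviation prod :: "'a asg pmf" where "prod \<equiv> prod_dist n D"

lemma prod_good: "x \<in> set_pmf prod \<Longrightarrow> good x"
  unfolding prod_dist_def good_def by (auto simp: set_Pi_pmf PiE_dflt_def)

lemma prod_split:
  assumes "T \<subseteq> {..<n}"
  shows "prod = map_pmf (\<lambda>(f,g) i. if i \<in> T then f i else g i)
                  (pair_pmf (Pi_pmf T undefined D) (Pi_pmf ({..<n} - T) undefined D))"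
proof -
  have "{..<n} = T \<union> ({..<n} - T)" using assms by auto
  hence "prod = Pi_pmf (T \<union> ({..<n} - T)) undefined D" unfolding prod_dist_def by simp
  also have "\<dots> = map_pmf (\<lambda>(f,g) i. if i \<in> T then f i else g i)
                  (pair_pmf (Pi_pmf T undefined D) (Pi_pmf ({..<n} - T) undefined D))"
    using assms by (intro Pi_pmf_union) (auto intro: finite_subset)
  finally show ?thesis .
qed

lemma split_integral:
  assumes jm: "j < m"
    and fdep: "\<And>x y. (\<forall>i\<in>S j. x i = y i) \<Longrightarrow> f x = f y"
  shows "(\<integral>\<^sup>+x. f x * R j W x \<partial>prod) = (\<integral>\<^sup>+x. f x \<partial>prod) * (\<integral>\<^sup>+x. W x \<partial>prod)"
proof -
  let ?T = "S j" and ?U = "{..<n} - S j"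
  let ?P = "Pi_pmf ?T undefined D" and ?Q = "Pi_pmf ?U undefined D"
  define mg where "mg = (\<lambda>(a::'a asg) (b::'a asg) i. if i \<in> ?T then a i else b i)"
  have sp: "prod = map_pmf (\<lambda>(a,b). mg a b) (pair_pmf ?P ?Q)"
    unfolding mg_def using prod_split[OF scope_sub[OF jm]] by (simp add: case_prod_unfold)
  define f' where "f' a = f (mg a undefined)" for a
  have ff: "f (mg a b) = f' a" for a b unfolding f'_def by (intro fdep) (simp add: mg_def)
  define h where "h b = (\<integral>\<^sup>+c. W (mg c b) \<partial>?P)" for b
  have rr: "R j W (mg a b) = h b" for a b
  proof -
    have "R j W (mg a b) = (\<integral>\<^sup>+c. W (\<lambda>i. if i \<in> ?T then c i else mg a b i) \<partial>?P)"
      unfolding R_def resample_def by simp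
    also have "(\<lambda>c i. if i \<in> ?T then c i else mg a b i) = (\<lambda>c. mg c b)"
      by (auto simp: mg_def fun_eq_iff)
    finally show ?thesis unfolding h_def by simp
  qed
  have "(\<integral>\<^sup>+x. f x * R j W x \<partial>prod) = (\<integral>\<^sup>+a. \<integral>\<^sup>+b. f' a * h b \<partial>?Q \<partial>?P)"
    unfolding sp by (simp add: nn_integral_pair_pmf' ff rr)
  also have "\<dots> = (\<integral>\<^sup>+a. f' a * (\<integral>\<^sup>+b. h b \<partial>?Q) \<partial>?P)"
    by (simp add: nn_integral_cmult)
  also have "\<dots> = (\<integral>\<^sup>+a. f' a \<partial>?P) * (\<integral>\<^sup>+b. h b \<partial>?Q)"
    by (simp add: nn_integral_multc)
  also have "(\<integral>\<^sup>+a. f' a \<partial>?P) = (\<integral>\<^sup>+x. f x \<partial>prod)"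
    unfolding sp by (simp add: nn_integral_pair_pmf' ff measure_pmf.emeasure_space_1)
  also have "(\<integral>\<^sup>+b. h b \<partial>?Q) = (\<integral>\<^sup>+x. W x \<partial>prod)"
  proof -
    have "(\<integral>\<^sup>+x. W x \<partial>prod) = (\<integral>\<^sup>+p. W (mg (fst p) (snd p)) \<partial>pair_pmf ?P ?Q)"
      unfolding sp by (simp add: case_prod_unfold)
    also have "\<dots> = (\<integral>\<^sup>+p. W (mg (snd p) (fst p)) \<partial>pair_pmf ?Q ?P)"
      by (subst pair_commute_pmf) (simp add: case_prod_unfold)
    also have "\<dots> = (\<integral>\<^sup>+b. h b \<partial>?Q)"
      unfolding h_def by (simp add: nn_integral_pair_pmf')
    finally show ?thesis ..
  qed
  finally show ?thesis .
qed

end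

context prs_sat
begin

definition ind :: "nat set \<Rightarrow> 'a asg \<Rightarrow> ennreal" where
  "ind I x = (if I \<subseteq> Bad x then 1 else 0)"

definition pI :: "nat set \<Rightarrow> real" where
  "pI I = (\<Prod>j\<in>I. p_clause n phi D j)"

definition cV :: ennreal where "cV = (\<integral>\<^sup>+x. V x \<partial>prod)"

lemma p_nonneg: "p_clause n phi D j \<ge> 0" unfolding p_clause_def by simp

lemma pI_nonneg: "pI I \<ge> 0" unfolding pI_def by (intro prod_nonneg p_nonneg)

lemma indep_sub: "I \<in> indep_sets m S \<Longrightarrow> J \<subseteq> I \<Longrightarrow> J \<in> indep_sets m S"
  unfolding indep_sets_def by blast

lemma indep_disj:
  assumes "I \<in> indep_sets m S" "j \<in> I" "l \<in> I" "j \<noteq> l"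
  shows "S j \<inter> S l = {}"
  using assms unfolding indep_sets_def dep_adj_def by blast

lemma indep_lt: "I \<in> indep_sets m S \<Longrightarrow> j \<in> I \<Longrightarrow> j < m"
  unfolding indep_sets_def by auto

lemma R_cong_supp:
  "(\<And>y. y \<in> set_pmf (resample D (S j) x) \<Longrightarrow> f y = f' y) \<Longrightarrow> R j f x = R j f' x"
  unfolding R_def by (intro nn_integral_cong_AE AE_pmfI) auto

lemma ind_frame:
  assumes "I \<in> indep_sets m S" "j \<in> I" "y \<in> set_pmf (resample D (S j) x)"
  shows "ind (I - {j}) y = ind (I - {j}) x"
proof -
  have jm: "j < m" using indep_lt assms by blast
  have "phi l y = phi l x" if "l \<in> I - {j}" for l
    using frame[OF indep_lt[OF assms(1)] finite_S[OF jm] _ assms(3), of l] that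
          indep_disj[OF assms(1,2), of l] by auto
  hence "(I - {j} \<subseteq> Bad y) = (I - {j} \<subseteq> Bad x)"
    unfolding Bad_def using indep_lt[OF assms(1)] by auto
  thus ?thesis unfolding ind_def by simp
qed

lemma ind_split: "j \<in> I \<Longrightarrow> ind I x = ind {j} x * ind (I - {j}) x"
  unfolding ind_def by auto

lemma ind_j_dep: "j < m \<Longrightarrow> \<forall>i\<in>S j. x i = y i \<Longrightarrow> ind {j} x = ind {j} y"
  unfolding ind_def Bad_def using scope_dep by auto

lemma int_ind_j: "j < m \<Longrightarrow> (\<integral>\<^sup>+x. ind {j} x \<partial>prod) = ennreal (p_clause n phi D j)"
proof -
  assume jm: "j < m"
  have "(\<lambda>x. ind {j} x) = indicator {x. \<not> phi j x}"
    using jm by (auto simp: ind_def Bad_def fun_eq_iff split: split_indicator)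
  hence "(\<integral>\<^sup>+x. ind {j} x \<partial>prod) = emeasure (measure_pmf prod) {x. \<not> phi j x}" by simp
  also have "\<dots> = ennreal (p_clause n phi D j)"
    unfolding p_clause_def by (simp add: measure_pmf.emeasure_eq_measure)
  finally show ?thesis .
qed

lemma P_rec:
  assumes I: "I \<in> indep_sets m S" and j: "j \<in> I"
  shows "(\<integral>\<^sup>+x. ind I x \<partial>prod) = ennreal (p_clause n phi D j) * (\<integral>\<^sup>+x. ind (I - {j}) x \<partial>prod)"
proof -
  have jm: "j < m" using indep_lt I j by blast
  have "(\<integral>\<^sup>+x. ind I x \<partial>prod) = (\<integral>\<^sup>+x. ind {j} x * R j (ind (I - {j})) x \<partial>prod)"
  proof (intro nn_integral_cong_AE AE_pmfI)
    fix x assume x: "x \<in> set_pmf prod"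
    have "R j (ind (I - {j})) x = R j (\<lambda>_. ind (I - {j}) x) x"
      by (intro R_cong_supp ind_frame[OF I j])
    thus "ind I x = ind {j} x * R j (ind (I - {j})) x" by (simp add: R_const ind_split[OF j])
  qed
  also have "\<dots> = (\<integral>\<^sup>+x. ind {j} x \<partial>prod) * (\<integral>\<^sup>+x. ind (I - {j}) x \<partial>prod)"
    by (rule split_integral[OF jm]) (rule ind_j_dep[OF jm])
  finally show ?thesis using int_ind_j[OF jm] by simp
qed

lemma aa_rec:
  assumes I: "I \<in> indep_sets m S" and j: "j \<in> I"
  shows "(\<integral>\<^sup>+x. V x * ind I x \<partial>prod) = a j * (\<integral>\<^sup>+x. ind I x \<partial>prod)
           + ennreal (p_clause n phi D j) * (\<integral>\<^sup>+x. V x * ind (I - {j}) x \<partial>prod)"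
proof -
  have jm: "j < m" using indep_lt I j by blast
  have "(\<integral>\<^sup>+x. V x * ind I x \<partial>prod) =
        (\<integral>\<^sup>+x. a j * ind I x + ind {j} x * R j (\<lambda>y. V y * ind (I - {j}) y) x \<partial>prod)"
  proof (intro nn_integral_cong_AE AE_pmfI)
    fix x assume x: "x \<in> set_pmf prod"
    have gx: "good x" using prod_good[OF x] .
    have "R j (\<lambda>y. V y * ind (I - {j}) y) x = R j (\<lambda>y. ind (I - {j}) x * V y) x"
      by (intro R_cong_supp) (simp add: ind_frame[OF I j] mult.commute)
    also have "\<dots> = ind (I - {j}) x * R j V x" by (rule R_cmult)
    finally have r: "R j (\<lambda>y. V y * ind (I - {j}) y) x = ind (I - {j}) x * R j V x" .
    show "V x * ind I x = a j * ind I x + ind {j} x * R j (\<lambda>y. V y * ind (I - {j}) y) x"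
    proof (cases "j \<in> Bad x")
      case True
      have "V x = a j + R j V x" by (rule V_harm[OF gx True])
      moreover have "ind {j} x = 1" using True by (simp add: ind_def)
      ultimately show ?thesis unfolding r ind_split[OF j, of x]
        by (simp add: algebra_simps)
    next
      case False
      hence "ind {j} x = 0" by (simp add: ind_def)
      thus ?thesis unfolding ind_split[OF j, of x] by simp
    qed
  qed
  also have "\<dots> = a j * (\<integral>\<^sup>+x. ind I x \<partial>prod) +
       (\<integral>\<^sup>+x. ind {j} x * R j (\<lambda>y. V y * ind (I - {j}) y) x \<partial>prod)"
    by (subst nn_integral_add) (auto simp: nn_integral_cmult)
  also have "(\<integral>\<^sup>+x. ind {j} x * R j (\<lambda>y. V y * ind (I - {j}) y) x \<partial>prod) =
      (\<integral>\<^sup>+x. ind {j} x \<partial>prod) * (\<integral>\<^sup>+x. V x * ind (I - {j}) x \<partial>prod)"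
    by (rule split_integral[OF jm]) (rule ind_j_dep[OF jm])
  finally show ?thesis using int_ind_j[OF jm] by simp
qed

lemma indep_formula:
  assumes "finite I" "I \<in> indep_sets m S"
  shows "(\<integral>\<^sup>+x. ind I x \<partial>prod) = ennreal (pI I) \<and>
         (\<integral>\<^sup>+x. V x * ind I x \<partial>prod) = ennreal (pI I) * (cV + (if k \<in> I then 1 else 0))"
  using assms
proof (induction I rule: finite_induct)
  case empty
  have "ind {} = (\<lambda>_. 1)" by (simp add: ind_def fun_eq_iff)
  thus ?case by (simp add: pI_def cV_def measure_pmf.emeasure_space_1)
next
  case (insert j I)
  have I: "I \<in> indep_sets m S" using indep_sub[OF insert.prems] by blast
  have jI: "j \<in> insert j I" by simp
  have rem: "insert j I - {j} = I" using insert.hyps by auto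
  note IH = insert.IH[OF I]
  have pp: "ennreal (pI (insert j I)) = ennreal (p_clause n phi D j) * ennreal (pI I)"
    unfolding pI_def using insert.hyps
    by (simp add: ennreal_mult[symmetric] p_nonneg prod_nonneg)
  have P: "(\<integral>\<^sup>+x. ind (insert j I) x \<partial>prod) = ennreal (pI (insert j I))"
    using P_rec[OF insert.prems jI] rem IH pp by simp
  have kk: "(if k \<in> insert j I then 1 else 0 :: ennreal) = a j + (if k \<in> I then 1 else 0)"
    using insert.hyps by (auto simp: a_def)
  have "(\<integral>\<^sup>+x. V x * ind (insert j I) x \<partial>prod) =
        a j * ennreal (pI (insert j I)) + ennreal (p_clause n phi D j) *
          (ennreal (pI I) * (cV + (if k \<in> I then 1 else 0)))"
    using aa_rec[OF insert.prems jI] rem IH P by simp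
  also have "\<dots> = ennreal (pI (insert j I)) * (cV + (if k \<in> insert j I then 1 else 0))"
    unfolding kk pp by (simp add: algebra_simps)
  finally show ?case using P by simp
qed

end

context prs_sat
begin

definition ev :: "nat set set" where "ev = {I \<in> indep_sets m S. even (card I)}"
definition od :: "nat set set" where "od = {I \<in> indep_sets m S. odd (card I)}"

lemma finite_indep: "finite (indep_sets m S)"
proof -
  have "indep_sets m S \<subseteq> Pow {..<m}" unfolding indep_sets_def by auto
  thus ?thesis by (rule finite_subset) simp
qed

lemma finite_ev: "finite ev" and finite_od: "finite od"
  unfolding ev_def od_def using finite_indep by auto

lemma indep_finite: "I \<in> indep_sets m S \<Longrightarrow> finite I"
  unfolding indep_sets_def using finite_subset by blast

lemma indep_ev_od: "indep_sets m S = ev \<union> od" "ev \<inter> od = {}"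
  unfolding ev_def od_def by auto

lemma sum_indep: "(\<Sum>I\<in>indep_sets m S. h I) = (\<Sum>I\<in>ev. h I) + (\<Sum>I\<in>od. h I)"
  for h :: "nat set \<Rightarrow> 'b::comm_monoid_add"
  unfolding indep_ev_od(1) by (rule sum.union_disjoint) (use finite_ev finite_od indep_ev_od(2) in auto)

lemma sum_indep_sign: "(\<Sum>I\<in>indep_sets m S. (-1) ^ card I * h I) = (\<Sum>I\<in>ev. h I) - (\<Sum>I\<in>od. h I)"
  for h :: "nat set \<Rightarrow> real"
proof -
  have "(\<Sum>I\<in>indep_sets m S. (-1) ^ card I * h I) = (\<Sum>I\<in>ev. (-1) ^ card I * h I) + (\<Sum>I\<in>od. (-1) ^ card I * h I)"
    by (rule sum_indep)
  also have "(\<Sum>I\<in>ev. (-1) ^ card I * h I) = (\<Sum>I\<in>ev. h I)"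
    by (intro sum.cong) (auto simp: ev_def)
  also have "(\<Sum>I\<in>od. (-1) ^ card I * h I) = (\<Sum>I\<in>od. - h I)"
    by (intro sum.cong) (auto simp: od_def)
  finally show ?thesis by (simp add: sum_negf)
qed

lemma sum_ind_card: "finite A \<Longrightarrow> (\<Sum>I\<in>A. ind I x) = of_nat (card (A \<inter> {I. I \<subseteq> Bad x}))"
  unfolding ind_def by (simp add: sum.If_cases)

lemma parity_pt:
  assumes gx: "good x"
  shows "(\<Sum>I\<in>ev. ind I x) = (if Bad x = {} then 1 else 0) + (\<Sum>I\<in>od. ind I x)"
proof -
  have subs: "T \<in> indep_sets m S" if "T \<subseteq> Bad x" for T
    unfolding indep_sets_def dep_adj_def using that Bad_sub bad_disjoint[OF gx] by blast
  have e: "ev \<inter> {I. I \<subseteq> Bad x} = {T. T \<subseteq> Bad x \<and> {} \<subseteq> T \<and> even (card T)}"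
    unfolding ev_def using subs by auto
  have o: "od \<inter> {I. I \<subseteq> Bad x} = {T. T \<subseteq> Bad x \<and> {} \<subseteq> T \<and> odd (card T)}"
    unfolding od_def using subs by auto
  show ?thesis
  proof (cases "Bad x = {}")
    case True
    have c1: "ev \<inter> {I. I \<subseteq> Bad x} = {{}}" unfolding e using True by auto
    have c2: "od \<inter> {I. I \<subseteq> Bad x} = {}" unfolding o using True by auto
    have "(\<Sum>I\<in>ev. ind I x) = 1" "(\<Sum>I\<in>od. ind I x) = 0"
      by (simp_all only: sum_ind_card[OF finite_ev] sum_ind_card[OF finite_od] c1 c2) simp_all
    thus ?thesis using True by simp
  next
    case False
    have "card {T. T \<subseteq> Bad x \<and> {} \<subseteq> T \<and> even (card T)} = card {T. T \<subseteq> Bad x \<and> {} \<subseteq> T \<and> odd (card T)}"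
      by (rule card_subsupersets_even_odd) (use finite_Bad False in auto)
    thus ?thesis using False
      by (simp only: sum_ind_card[OF finite_ev] sum_ind_card[OF finite_od] e o) simp
  qed
qed

lemma EO_P:
  "(\<Sum>I\<in>ev. \<integral>\<^sup>+x. ind I x \<partial>prod) =
     ennreal (measure_pmf.prob prod {x. Phi m phi x}) + (\<Sum>I\<in>od. \<integral>\<^sup>+x. ind I x \<partial>prod)"
proof -
  have "(\<Sum>I\<in>ev. \<integral>\<^sup>+x. ind I x \<partial>prod) = (\<integral>\<^sup>+x. (\<Sum>I\<in>ev. ind I x) \<partial>prod)"
    by (rule nn_integral_sum[symmetric]) auto
  also have "\<dots> = (\<integral>\<^sup>+x. (if Bad x = {} then 1 else 0) + (\<Sum>I\<in>od. ind I x) \<partial>prod)"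
    by (intro nn_integral_cong_AE AE_pmfI parity_pt prod_good)
  also have "\<dots> = (\<integral>\<^sup>+x. (if Bad x = {} then 1 else 0) \<partial>prod) + (\<integral>\<^sup>+x. (\<Sum>I\<in>od. ind I x) \<partial>prod)"
    by (rule nn_integral_add) auto
  also have "(\<integral>\<^sup>+x. (\<Sum>I\<in>od. ind I x) \<partial>prod) = (\<Sum>I\<in>od. \<integral>\<^sup>+x. ind I x \<partial>prod)"
    by (rule nn_integral_sum) auto
  also have "(\<lambda>x. if Bad x = {} then 1 else 0 :: ennreal) = indicator {x. Phi m phi x}"
    by (auto simp: fun_eq_iff Phi_iff split: split_indicator)
  also have "(\<integral>\<^sup>+x. indicator {x. Phi m phi x} x \<partial>prod) = ennreal (measure_pmf.prob prod {x. Phi m phi x})"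
    by (simp add: measure_pmf.emeasure_eq_measure)
  finally show ?thesis .
qed

lemma EO_V:
  "(\<Sum>I\<in>ev. \<integral>\<^sup>+x. V x * ind I x \<partial>prod) = (\<Sum>I\<in>od. \<integral>\<^sup>+x. V x * ind I x \<partial>prod)"
proof -
  have "(\<Sum>I\<in>ev. \<integral>\<^sup>+x. V x * ind I x \<partial>prod) = (\<integral>\<^sup>+x. (\<Sum>I\<in>ev. V x * ind I x) \<partial>prod)"
    by (rule nn_integral_sum[symmetric]) auto
  also have "\<dots> = (\<integral>\<^sup>+x. (\<Sum>I\<in>od. V x * ind I x) \<partial>prod)"
  proof (intro nn_integral_cong_AE AE_pmfI)
    fix x assume "x \<in> set_pmf prod"
    hence gx: "good x" by (rule prod_good)
    have "(\<Sum>I\<in>ev. V x * ind I x) = V x * (\<Sum>I\<in>ev. ind I x)" by (simp add: sum_distrib_left)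
    also have "\<dots> = V x * ((if Bad x = {} then 1 else 0) + (\<Sum>I\<in>od. ind I x))" by (simp add: parity_pt[OF gx])
    also have "\<dots> = V x * (\<Sum>I\<in>od. ind I x)" by (cases "Bad x = {}") (simp_all add: V_Phi)
    also have "\<dots> = (\<Sum>I\<in>od. V x * ind I x)" by (simp add: sum_distrib_left)
    finally show "(\<Sum>I\<in>ev. V x * ind I x) = (\<Sum>I\<in>od. V x * ind I x)" .
  qed
  also have "\<dots> = (\<Sum>I\<in>od. \<integral>\<^sup>+x. V x * ind I x \<partial>prod)"
    by (rule nn_integral_sum) auto
  finally show ?thesis .
qed

lemma cV_finite: "cV \<le> ennreal Cb"
proof -
  have "cV \<le> (\<integral>\<^sup>+x. ennreal Cb \<partial>prod)"
    unfolding cV_def by (intro nn_integral_mono_AE AE_pmfI V_bound prod_good)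
  thus ?thesis by (simp add: measure_pmf.emeasure_space_1)
qed

lemma ev_formula: "I \<in> ev \<or> I \<in> od \<Longrightarrow> (\<integral>\<^sup>+x. ind I x \<partial>prod) = ennreal (pI I) \<and>
   (\<integral>\<^sup>+x. V x * ind I x \<partial>prod) = ennreal (pI I) * (cV + (if k \<in> I then 1 else 0))"
  using indep_formula indep_finite unfolding ev_def od_def by auto

lemma q_empty_eq: "q_coeff n m phi S D {} = measure_pmf.prob prod {x. Phi m phi x}"
proof -
  have "ennreal (\<Sum>I\<in>ev. pI I) = ennreal (measure_pmf.prob prod {x. Phi m phi x}) + ennreal (\<Sum>I\<in>od. pI I)"
    using EO_P ev_formula by (simp add: sum_ennreal pI_nonneg)
  hence "(\<Sum>I\<in>ev. pI I) = measure_pmf.prob prod {x. Phi m phi x} + (\<Sum>I\<in>od. pI I)"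
    by (simp add: ennreal_plus[symmetric] sum_nonneg pI_nonneg del: ennreal_plus)
  moreover have "q_coeff n m phi S D {} = (\<Sum>I\<in>ev. pI I) - (\<Sum>I\<in>od. pI I)"
    unfolding q_coeff_def using sum_indep_sign[of pI] by (simp add: pI_def)
  ultimately show ?thesis by simp
qed

lemma q_empty_pos: "q_coeff n m phi S D {} > 0"
  using q_empty_eq sat by simp

lemma q_k_eq: "q_coeff n m phi S D {k} =
  (\<Sum>I\<in>od. if k \<in> I then pI I else 0) - (\<Sum>I\<in>ev. if k \<in> I then pI I else 0)"
proof -
  have "q_coeff n m phi S D {k} = (\<Sum>I\<in>indep_sets m S. if k \<in> I then (-1) ^ card (I - {k}) * pI I else 0)"
    unfolding q_coeff_def pI_def using finite_indep by (simp add: sum.inter_filter[symmetric])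
  also have "\<dots> = (\<Sum>I\<in>indep_sets m S. (-1) ^ card I * (if k \<in> I then - pI I else 0))"
  proof (intro sum.cong refl)
    fix I assume I: "I \<in> indep_sets m S"
    show "(if k \<in> I then (-1) ^ card (I - {k}) * pI I else 0) = (-1) ^ card I * (if k \<in> I then - pI I else 0)"
    proof (cases "k \<in> I")
      case True
      have "card I = Suc (card (I - {k}))" by (rule card_Suc_Diff1[symmetric, OF indep_finite[OF I] True])
      hence "(-1::real) ^ card I = - ((-1) ^ card (I - {k}))" by simp
      thus ?thesis using True by simp
    qed simp
  qed
  also have "\<dots> = (\<Sum>I\<in>ev. if k \<in> I then - pI I else 0) - (\<Sum>I\<in>od. if k \<in> I then - pI I else 0)"
    by (rule sum_indep_sign)
  also have "\<dots> = (\<Sum>I\<in>od. if k \<in> I then pI I else 0) - (\<Sum>I\<in>ev. if k \<in> I then pI I else 0)"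
  proof -
    have a: "(\<Sum>I\<in>ev. if k \<in> I then - pI I else 0) = - (\<Sum>I\<in>ev. if k \<in> I then pI I else 0)"
      unfolding sum_negf[symmetric] by (intro sum.cong) auto
    have b: "(\<Sum>I\<in>od. if k \<in> I then - pI I else 0) = - (\<Sum>I\<in>od. if k \<in> I then pI I else 0)"
      unfolding sum_negf[symmetric] by (intro sum.cong) auto
    show ?thesis unfolding a b by simp
  qed
  finally show ?thesis .
qed

lemma cV_eq: "cV = ennreal (q_coeff n m phi S D {k} / q_coeff n m phi S D {})"
proof -
  obtain cr where cr: "cV = ennreal cr" "cr \<ge> 0"
    using cV_finite by (cases cV rule: ennreal_cases) (auto simp: top_unique)
  define kk where "kk I = (if k \<in> I then 1 else 0 :: real)" for I
  have kk_enn: "(if k \<in> I then 1 else 0 :: ennreal) = ennreal (kk I)" for I by (simp add: kk_def)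
  have "(\<Sum>I\<in>ev. ennreal (pI I * (cr + kk I))) = (\<Sum>I\<in>od. ennreal (pI I * (cr + kk I)))"
    using EO_V ev_formula cr(2) pI_nonneg
    by (simp add: cr(1) kk_enn ennreal_mult kk_def)
  hence "ennreal (\<Sum>I\<in>ev. pI I * (cr + kk I)) = ennreal (\<Sum>I\<in>od. pI I * (cr + kk I))"
    using cr(2) pI_nonneg by (simp add: sum_ennreal kk_def)
  hence eq: "(\<Sum>I\<in>ev. pI I * (cr + kk I)) = (\<Sum>I\<in>od. pI I * (cr + kk I))"
    using cr(2) pI_nonneg by (subst (asm) ennreal_inj) (auto intro!: sum_nonneg simp: kk_def)
  have "cr * ((\<Sum>I\<in>ev. pI I) - (\<Sum>I\<in>od. pI I)) =
        (\<Sum>I\<in>od. pI I * kk I) - (\<Sum>I\<in>ev. pI I * kk I)"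
    using eq by (simp add: algebra_simps sum.distrib sum_distrib_left)
  moreover have "q_coeff n m phi S D {} = (\<Sum>I\<in>ev. pI I) - (\<Sum>I\<in>od. pI I)"
    unfolding q_coeff_def using sum_indep_sign[of pI] by (simp add: pI_def)
  moreover have "q_coeff n m phi S D {k} = (\<Sum>I\<in>od. pI I * kk I) - (\<Sum>I\<in>ev. pI I * kk I)"
    unfolding q_k_eq kk_def by (simp add: if_distrib cong: if_cong)
  ultimately have "cr * q_coeff n m phi S D {} = q_coeff n m phi S D {k}" by simp
  hence "cr = q_coeff n m phi S D {k} / q_coeff n m phi S D {}"
    using q_empty_pos by (simp add: field_simps)
  thus ?thesis using cr(1) by simp
qed

end

context prs_sat
begin

definition cnt :: "'a hist \<Rightarrow> ennreal" where
  "cnt h = of_nat (count_list (map fst (snd h)) k)"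

lemma cnt_cons: "cnt (x0, (j, x') # l) = cnt (x0, l) + a j"
  unfolding cnt_def a_def by (simp add: add.commute)

lemma cur_cons: "cur_asg (x0, (j, x') # l) = x'"
  unfolding cur_asg_def by simp

lemma prs_step_alt:
  "\<not> Phi m phi (cur_asg h) \<Longrightarrow> prs_step m phi S D sel h =
     bind_pmf (sel h) (\<lambda>j. map_pmf (\<lambda>x'. (fst h, (j, x') # snd h)) (resample D (S j) (cur_asg h)))"
  unfolding prs_step_def by (simp add: map_pmf_def)

lemma step_int:
  assumes "\<not> Phi m phi (cur_asg h)"
  shows "(\<integral>\<^sup>+h'. cnt h' + W (cur_asg h') \<partial>prs_step m phi S D sel h) =
         (\<integral>\<^sup>+j. (cnt h + a j) + R j W (cur_asg h) \<partial>sel h)"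
proof -
  have e: "cnt (fst h, (j, x') # snd h) = cnt h + a j" for j x'
    using cnt_cons[of "fst h" j x' "snd h"] by simp
  show ?thesis
    unfolding prs_step_alt[OF assms]
    by (simp add: e cur_cons R_def) (intro nn_integral_cong, rule R_add_const[unfolded R_def])
qed

lemma step_Phi:
  "Phi m phi (cur_asg h) \<Longrightarrow> prs_step m phi S D sel h = return_pmf h"
  unfolding prs_step_def by simp

context
  fixes sel :: "'a hist \<Rightarrow> nat pmf"
  assumes sel_valid: "\<And>h. \<not> Phi m phi (cur_asg h) \<Longrightarrow>
                       \<forall>j\<in>set_pmf (sel h). j < m \<and> \<not> phi j (cur_asg h)"
begin

lemma sel_bad: "\<not> Phi m phi (cur_asg h) \<Longrightarrow> j \<in> set_pmf (sel h) \<Longrightarrow> j \<in> Bad (cur_asg h)"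
  using sel_valid unfolding Bad_def by blast

lemma run_good: "h \<in> set_pmf (prs_run n m phi S D sel t) \<Longrightarrow> good (cur_asg h)"
proof (induction t arbitrary: h)
  case 0
  then obtain x where "x \<in> set_pmf prod" "h = (x, [])" by auto
  thus ?case using prod_good by (simp add: cur_asg_def)
next
  case (Suc t)
  then obtain h0 where h0: "h0 \<in> set_pmf (prs_run n m phi S D sel t)"
    "h \<in> set_pmf (prs_step m phi S D sel h0)" by auto
  show ?case
  proof (cases "Phi m phi (cur_asg h0)")
    case True thus ?thesis using h0 Suc.IH by (simp add: step_Phi)
  next
    case False
    then obtain j x' where jx: "j \<in> set_pmf (sel h0)" "x' \<in> set_pmf (resample D (S j) (cur_asg h0))"
      "h = (fst h0, (j, x') # snd h0)"
      using h0(2) by (auto simp: prs_step_alt)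
    have "j < m" using sel_valid[OF False] jx(1) by blast
    thus ?thesis using good_resample[OF Suc.IH[OF h0(1)] _ jx(2)] jx(3) by (simp add: cur_cons)
  qed
qed

lemma run_Suc_int:
  "(\<integral>\<^sup>+h. F h \<partial>prs_run n m phi S D sel (Suc t)) =
   (\<integral>\<^sup>+h. (\<integral>\<^sup>+h'. F h' \<partial>prs_step m phi S D sel h) \<partial>prs_run n m phi S D sel t)"
  by simp

lemma run_0_int:
  "(\<integral>\<^sup>+h. cnt h + W (cur_asg h) \<partial>prs_run n m phi S D sel 0) = (\<integral>\<^sup>+x. W x \<partial>prod)"
proof -
  have a: "cnt (x, []) = 0" for x :: "'a asg" by (simp add: cnt_def)
  have b: "cur_asg (x, []) = x" for x :: "'a asg" by (simp add: cur_asg_def)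
  show ?thesis by (simp add: a b)
qed

lemma run_V: "(\<integral>\<^sup>+h. cnt h + V (cur_asg h) \<partial>prs_run n m phi S D sel t) = cV"
proof (induction t)
  case 0 show ?case unfolding cV_def by (rule run_0_int)
next
  case (Suc t)
  have "(\<integral>\<^sup>+h. cnt h + V (cur_asg h) \<partial>prs_run n m phi S D sel (Suc t)) =
        (\<integral>\<^sup>+h. cnt h + V (cur_asg h) \<partial>prs_run n m phi S D sel t)"
    unfolding run_Suc_int
  proof (intro nn_integral_cong_AE AE_pmfI)
    fix h assume h: "h \<in> set_pmf (prs_run n m phi S D sel t)"
    show "(\<integral>\<^sup>+h'. cnt h' + V (cur_asg h') \<partial>prs_step m phi S D sel h) = cnt h + V (cur_asg h)"
    proof (cases "Phi m phi (cur_asg h)")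
      case True thus ?thesis by (simp add: step_Phi)
    next
      case False
      have "(\<integral>\<^sup>+j. (cnt h + a j) + R j V (cur_asg h) \<partial>sel h) = (\<integral>\<^sup>+j. cnt h + V (cur_asg h) \<partial>sel h)"
      proof (intro nn_integral_cong_AE AE_pmfI)
        fix j assume "j \<in> set_pmf (sel h)"
        hence "V (cur_asg h) = a j + R j V (cur_asg h)"
          using V_harm[OF run_good[OF h] sel_bad[OF False]] by blast
        thus "(cnt h + a j) + R j V (cur_asg h) = cnt h + V (cur_asg h)" by (simp add: ac_simps)
      qed
      thus ?thesis using step_int[OF False] by (simp add: measure_pmf.emeasure_space_1)
    qed
  qed
  thus ?case using Suc.IH by simp
qed

lemma run_g: "(\<integral>\<^sup>+x. g (s + t) x \<partial>prod) \<le> (\<integral>\<^sup>+h. cnt h + g s (cur_asg h) \<partial>prs_run n m phi S D sel t)"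
proof (induction t arbitrary: s)
  case 0
  have "(\<integral>\<^sup>+h. cnt h + g s (cur_asg h) \<partial>prs_run n m phi S D sel 0) = (\<integral>\<^sup>+x. g s x \<partial>prod)"
    by (rule run_0_int)
  thus ?case by simp
next
  case (Suc t)
  have "(\<integral>\<^sup>+x. g (s + Suc t) x \<partial>prod) = (\<integral>\<^sup>+x. g (Suc s + t) x \<partial>prod)" by simp
  also have "\<dots> \<le> (\<integral>\<^sup>+h. cnt h + g (Suc s) (cur_asg h) \<partial>prs_run n m phi S D sel t)" by (rule Suc.IH)
  also have "\<dots> \<le> (\<integral>\<^sup>+h. cnt h + g s (cur_asg h) \<partial>prs_run n m phi S D sel (Suc t))"
    unfolding run_Suc_int
  proof (intro nn_integral_mono_AE AE_pmfI)
    fix h assume h: "h \<in> set_pmf (prs_run n m phi S D sel t)"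
    show "cnt h + g (Suc s) (cur_asg h) \<le> (\<integral>\<^sup>+h'. cnt h' + g s (cur_asg h') \<partial>prs_step m phi S D sel h)"
    proof (cases "Phi m phi (cur_asg h)")
      case True
      hence "g (Suc s) (cur_asg h) = 0" by (simp add: g_Suc Tmin_Phi Phi_iff)
      thus ?thesis using True by (simp add: step_Phi)
    next
      case False
      have "cnt h + g (Suc s) (cur_asg h) = (\<integral>\<^sup>+j. cnt h + g (Suc s) (cur_asg h) \<partial>sel h)"
        by (simp add: measure_pmf.emeasure_space_1)
      also have "\<dots> \<le> (\<integral>\<^sup>+j. (cnt h + a j) + R j (g s) (cur_asg h) \<partial>sel h)"
      proof (intro nn_integral_mono_AE AE_pmfI)
        fix j assume "j \<in> set_pmf (sel h)"
        hence "g (Suc s) (cur_asg h) \<le> a j + R j (g s) (cur_asg h)"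
          unfolding g_Suc by (intro Tmin_le sel_bad[OF False])
        thus "cnt h + g (Suc s) (cur_asg h) \<le> (cnt h + a j) + R j (g s) (cur_asg h)"
          by (simp add: add.assoc add_left_mono)
      qed
      also have "\<dots> = (\<integral>\<^sup>+h'. cnt h' + g s (cur_asg h') \<partial>prs_step m phi S D sel h)"
        using step_int[OF False] by simp
      finally show ?thesis .
    qed
  qed
  finally show ?case .
qed

lemma expected_eq: "expected_resamplings n m phi S D sel k = cV"
proof (rule antisym)
  show "expected_resamplings n m phi S D sel k \<le> cV"
    unfolding expected_resamplings_def
  proof (rule SUP_least)
    fix t
    have "(\<integral>\<^sup>+h. of_nat (count_list (map fst (snd h)) k) \<partial>prs_run n m phi S D sel t)
          \<le> (\<integral>\<^sup>+h. cnt h + V (cur_asg h) \<partial>prs_run n m phi S D sel t)"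
      by (intro nn_integral_mono) (simp add: cnt_def)
    thus "(\<integral>\<^sup>+h. of_nat (count_list (map fst (snd h)) k) \<partial>prs_run n m phi S D sel t) \<le> cV"
      using run_V by simp
  qed
next
  have "cV = (SUP t. \<integral>\<^sup>+x. g t x \<partial>prod)"
    unfolding cV_def V_def
    by (rule nn_integral_monotone_convergence_SUP) (auto simp: incseq_def le_fun_def intro: incseq_SucI g_mono_Suc[THEN order.trans] dest: g_incseq[THEN incseqD])
  also have "\<dots> \<le> expected_resamplings n m phi S D sel k"
    unfolding expected_resamplings_def
  proof (intro SUP_mono)
    fix t
    have "(\<integral>\<^sup>+x. g (0 + t) x \<partial>prod) \<le> (\<integral>\<^sup>+h. cnt h + g 0 (cur_asg h) \<partial>prs_run n m phi S D sel t)"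
      by (rule run_g)
    hence "(\<integral>\<^sup>+x. g t x \<partial>prod) \<le> (\<integral>\<^sup>+h. of_nat (count_list (map fst (snd h)) k) \<partial>prs_run n m phi S D sel t)"
      by (simp add: g_0 cnt_def)
    thus "\<exists>t'\<in>UNIV. (\<integral>\<^sup>+x. g t x \<partial>prod) \<le> (\<integral>\<^sup>+h. of_nat (count_list (map fst (snd h)) k) \<partial>prs_run n m phi S D sel t')"
      by blast
  qed
  finally show "cV \<le> expected_resamplings n m phi S D sel k" .
qed

end

end

theorem theorem3:
  fixes n m :: nat
    and Dom :: "nat \<Rightarrow> 'a set"
    and D :: "nat \<Rightarrow> 'a pmf"
    and phi :: "nat \<Rightarrow> 'a asg \<Rightarrow> bool"
    and S :: "nat \<Rightarrow> nat set"
    and sel :: "'a hist \<Rightarrow> nat pmf"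
    and k :: nat
  assumes dom_countable: "\<And>i. i < n \<Longrightarrow> countable (Dom i)"
    and dist_on_dom: "\<And>i. i < n \<Longrightarrow> set_pmf (D i) \<subseteq> Dom i"
    and scope_sub: "\<And>j. j < m \<Longrightarrow> S j \<subseteq> {..<n}"
    and scope_ne: "\<And>j. j < m \<Longrightarrow> S j \<noteq> {}"
    and scope_dep: "\<And>j x y. j < m \<Longrightarrow> (\<forall>i\<in>S j. x i = y i) \<Longrightarrow> phi j x = phi j y"
    and extr: "extremal n m phi S Dom"
    and sat: "measure_pmf.prob (prod_dist n D) {x. Phi m phi x} > 0"
    and sel_valid: "\<And>h. \<not> Phi m phi (cur_asg h) \<Longrightarrow>
                       \<forall>j\<in>set_pmf (sel h). j < m \<and> \<not> phi j (cur_asg h)"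
    and k_lt: "k < m"
  shows "expected_resamplings n m phi S D sel k
           = ennreal (q_coeff n m phi S D {k} / q_coeff n m phi S D {})"
proof -
  interpret prs_sat n m Dom D phi S k
    by unfold_locales (use dist_on_dom scope_sub scope_dep extr k_lt sat in auto)
  show ?thesis using expected_eq[OF sel_valid] cV_eq by simp
qed

end
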